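(* There exists an amicable orthogonal design $AOD\big(2^9;\ 2^6_{(8)};\ 2^6_{(8)}\big)$, i.e. a pair $(C;D)$ of $2^9\times2^9$ matrices, $C$ with entries in $\{0,\pm x_1,\ldots,\pm x_8\}$ and $D$ with entries in $\{0,\pm y_1,\ldots,\pm y_8\}$, such that $CC^{\rm T}=\big(2^6\sum_{i=1}^8x_i^2\big)I_{2^9}$, $DD^{\rm T}=\big(2^6\sum_{i=1}^8y_i^2\big)I_{2^9}$ and $CD^{\rm T}=DC^{\rm T}$.
   Context: The notation $u_{(k)}$ in a type means that $u$ is repeated $k$ times. $x_1,\ldots,x_8,y_1,\ldots,y_8$ are sixteen distinct commuting indeterminates. An amicable orthogonal design $AOD(m;c_1,\ldots,c_k;d_1,\ldots,d_\ell)$ is a pair $(X;Y)$ of $m\times m$ matrices with $X$ having entries in $\{0,\pm x_1,\ldots,\pm x_k\}$, $Y$ having entries in $\{0,\pm y_1,\ldots,\pm y_\ell\}$, $XX^{\rm T}=(\sum c_ix_i^2)I_m$, $YY^{\rm T}=(\sum d_iy_i^2)I_m$, and $XY^{\rm T}=YX^{\rm T}$. *)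

theory Defs
  imports Main "HOL-Library.Poly_Mapping"
begin

text \<open>Multivariate polynomials with integer coefficients in countably many
commuting indeterminates: monomials are finitely supported exponent maps
nat \<Rightarrow>0 nat, polynomials finitely supported coefficient maps.\<close>
type_synonym mpoly = "(nat \<Rightarrow>\<^sub>0 nat) \<Rightarrow>\<^sub>0 int"

definition Var :: "nat \<Rightarrow> mpoly" where
  "Var n = Poly_Mapping.single (Poly_Mapping.single n 1) 1"

text \<open>The indeterminates x_1, x_2, ... (index t counts from 0) and y_1, y_2, ...;
all pairwise distinct.\<close>
definition xv :: "nat \<Rightarrow> mpoly" where "xv t = Var (2 * t)"
definition yv :: "nat \<Rightarrow> mpoly" where "yv t = Var (2 * t + 1)"

text \<open>An m x m matrix is a function nat \<Rightarrow> nat \<Rightarrow> mpoly, only indices < m matter.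
Entries of a design in variables v_1..v_k lie in {0, \<plusminus>v_1, ..., \<plusminus>v_k}.\<close>
definition entries_in :: "nat \<Rightarrow> (nat \<Rightarrow> mpoly) \<Rightarrow> nat \<Rightarrow> (nat \<Rightarrow> nat \<Rightarrow> mpoly) \<Rightarrow> bool" where
  "entries_in m v k X \<longleftrightarrow>
     (\<forall>i<m. \<forall>j<m. X i j = 0 \<or> (\<exists>t<k. X i j = v t \<or> X i j = - v t))"

definition gram_ok :: "nat \<Rightarrow> (nat \<Rightarrow> mpoly) \<Rightarrow> nat list \<Rightarrow> (nat \<Rightarrow> nat \<Rightarrow> mpoly) \<Rightarrow> bool" where
  "gram_ok m v c X \<longleftrightarrow>
     (\<forall>i<m. \<forall>j<m. (\<Sum>l<m. X i l * X j l) =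
        (if i = j then (\<Sum>t<length c. of_nat (c ! t) * v t ^ 2) else 0))"

definition is_AOD :: "nat \<Rightarrow> nat list \<Rightarrow> nat list \<Rightarrow> (nat \<Rightarrow> nat \<Rightarrow> mpoly) \<Rightarrow> (nat \<Rightarrow> nat \<Rightarrow> mpoly) \<Rightarrow> bool" where
  "is_AOD m c d X Y \<longleftrightarrow>
     entries_in m xv (length c) X \<and> entries_in m yv (length d) Y \<and>
     gram_ok m xv c X \<and> gram_ok m yv d Y \<and>
     (\<forall>i<m. \<forall>j<m. (\<Sum>l<m. X i l * Y j l) = (\<Sum>l<m. Y i l * X j l))"

end

theory Submission
  imports Defs
begin

type_synonym m2 = "int \<times> int \<times> int \<times> int"

fun ev :: "m2 \<Rightarrow> nat \<Rightarrow> nat \<Rightarrow> int" where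
  "ev (a,b,c,d) i j = (if i = 0 then (if j = 0 then a else b) else (if j = 0 then c else d))"

fun kr :: "m2 list \<Rightarrow> nat \<Rightarrow> nat \<Rightarrow> int" where
  "kr [] i j = (if i = 0 \<and> j = 0 then 1 else 0)"
| "kr (q # L) i j = ev q (i mod 2) (j mod 2) * kr L (i div 2) (j div 2)"

fun mulT :: "m2 \<Rightarrow> m2 \<Rightarrow> m2" where
  "mulT (a,b,c,d) (e,f,g,h) = (a*e+b*f, a*g+b*h, c*e+d*f, c*g+d*h)"

lemma sum_split2: "(\<Sum>k<2*(n::nat). f k) = (\<Sum>k<n. f (2*k) + f (2*k+1))"
  by (induction n) (auto simp: ac_simps)

lemma ev_mulT: "a < 2 \<Longrightarrow> b < 2 \<Longrightarrow>
  ev p a 0 * ev q b 0 + ev p a 1 * ev q b 1 = ev (mulT p q) a b"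
  by (cases p; cases q) (auto simp: less_2_cases_iff)

lemma KP: "length L = length L' \<Longrightarrow>
  (\<Sum>k<2^length L. kr L i k * kr L' j k) = kr (map2 mulT L L') i j"
proof (induction L arbitrary: L' i j)
  case Nil
  then show ?case by simp
next
  case (Cons q L)
  then obtain q' M where L': "L' = q' # M" and len: "length L = length M"
    by (cases L') auto
  have "(\<Sum>k<2^length (q#L). kr (q#L) i k * kr L' j k)
      = (\<Sum>k<2^length L. kr (q#L) i (2*k) * kr L' j (2*k) + kr (q#L) i (2*k+1) * kr L' j (2*k+1))"
    by (simp add: sum_split2)
  also have "\<dots> = (\<Sum>k<2^length L. (ev q (i mod 2) 0 * ev q' (j mod 2) 0 + ev q (i mod 2) 1 * ev q' (j mod 2) 1)
        * (kr L (i div 2) k * kr M (j div 2) k))"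
  proof (rule sum.cong[OF refl])
    fix k :: nat
    have a: "(2*k) mod 2 = 0" "(2*k) div 2 = k" "(2*k+1) mod 2 = 1" "(2*k+1) div 2 = k"
      by simp_all
    show "kr (q#L) i (2*k) * kr L' j (2*k) + kr (q#L) i (2*k+1) * kr L' j (2*k+1) =
      (ev q (i mod 2) 0 * ev q' (j mod 2) 0 + ev q (i mod 2) 1 * ev q' (j mod 2) 1)
        * (kr L (i div 2) k * kr M (j div 2) k)"
      unfolding L' kr.simps a by (simp add: algebra_simps)
  qed
  also have "\<dots> = ev (mulT q q') (i mod 2) (j mod 2) * kr (map2 mulT L M) (i div 2) (j div 2)"
    using ev_mulT[of "i mod 2" "j mod 2" q q'] by (simp add: sum_distrib_left[symmetric] Cons.IH[OF len])
  finally show ?case by (simp add: L')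
qed

definition sy :: "m2 \<Rightarrow> bool" where "sy q = (fst (snd q) = fst (snd (snd q)))"
definition an :: "m2 \<Rightarrow> bool" where
  "an q = (fst q = 0 \<and> snd (snd (snd q)) = 0 \<and> fst (snd (snd q)) = - fst (snd q))"

lemma ev_sym: "sy q \<Longrightarrow> a < 2 \<Longrightarrow> b < 2 \<Longrightarrow> ev q b a = ev q a b"
  by (cases q) (auto simp: sy_def less_2_cases_iff)
lemma ev_anti: "an q \<Longrightarrow> a < 2 \<Longrightarrow> b < 2 \<Longrightarrow> ev q b a = - ev q a b"
  by (cases q) (auto simp: an_def less_2_cases_iff)

lemma kr_transp: "\<forall>q\<in>set L. sy q \<or> an q \<Longrightarrow>
  kr L j i = (-1) ^ length (filter (\<lambda>q. \<not> sy q) L) * kr L i j"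
proof (induction L arbitrary: i j)
  case Nil
  then show ?case by auto
next
  case (Cons q L)
  have IH: "kr L (j div 2) (i div 2) = (-1) ^ length (filter (\<lambda>q. \<not> sy q) L) * kr L (i div 2) (j div 2)"
    using Cons.prems by (intro Cons.IH) simp
  have k1: "kr (q#L) j i = ev q (j mod 2) (i mod 2) * kr L (j div 2) (i div 2)" by simp
  have k2: "kr (q#L) i j = ev q (i mod 2) (j mod 2) * kr L (i div 2) (j div 2)" by simp
  show ?case
  proof (cases "sy q")
    case True
    have "ev q (j mod 2) (i mod 2) = ev q (i mod 2) (j mod 2)" by (rule ev_sym[OF True]) auto
    then show ?thesis unfolding k1 k2 IH using True by simp
  next
    case False
    then have "an q" using Cons.prems by auto
    have "ev q (j mod 2) (i mod 2) = - ev q (i mod 2) (j mod 2)" by (rule ev_anti[OF \<open>an q\<close>]) auto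
    then show ?thesis unfolding k1 k2 IH using False by simp
  qed
qed

lemma kr_diag: "\<forall>q\<in>set L. \<exists>c. q = (c,0,0,c) \<Longrightarrow>
  kr L i j = (if i = j \<and> i < 2^length L then prod_list (map fst L) else 0)"
proof (induction L arbitrary: i j)
  case Nil
  then show ?case by auto
next
  case (Cons q L)
  then obtain c where q: "q = (c,0,0,c)" by auto
  have IH: "kr L (i div 2) (j div 2) = (if i div 2 = j div 2 \<and> i div 2 < 2^length L then prod_list (map fst L) else 0)"
    using Cons by auto
  have ev0: "ev q a b = (if a = b then c else 0)" if "a < 2" "b < 2" for a b
    using that unfolding q by (auto simp: less_2_cases_iff)
  have l: "i < 2^Suc (length L) \<longleftrightarrow> i div 2 < 2^length L" by auto
  show ?case
  proof (cases "i = j")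
    case True
    have e: "ev q (i mod 2) (j mod 2) = c" using ev0[of "i mod 2" "i mod 2"] True by simp
    have "kr (q#L) i j = c * kr L (i div 2) (j div 2)" by (simp only: kr.simps e)
    also have "\<dots> = (if i = j \<and> i < 2^length (q#L) then c * prod_list (map fst L) else 0)"
      using IH l True by simp
    finally show ?thesis using q by simp
  next
    case False
    then have "i mod 2 \<noteq> j mod 2 \<or> i div 2 \<noteq> j div 2"
      by (metis div_mult_mod_eq)
    then have "ev q (i mod 2) (j mod 2) = 0 \<or> kr L (i div 2) (j div 2) = 0"
      using IH ev0[of "i mod 2" "j mod 2"] by auto
    then show ?thesis using False by auto
  qed
qed


fun disj :: "m2 \<Rightarrow> m2 \<Rightarrow> bool" where
  "disj (a,b,c,d) (e,f,g,h) = (a*e = 0 \<and> b*f = 0 \<and> c*g = 0 \<and> d*h = 0)"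

lemma ev_disj: "disj q q' \<Longrightarrow> ev q a b * ev q' a b = 0"
  by (cases q; cases q') auto

lemma kr_disj: "list_ex (\<lambda>(q,q'). disj q q') (zip L L') \<Longrightarrow> kr L i j * kr L' i j = 0"
proof (induction L arbitrary: L' i j)
  case Nil
  then show ?case by simp
next
  case (Cons q L)
  then obtain q' M where L': "L' = q' # M" by (cases L') auto
  show ?case
  proof (cases "disj q q'")
    case True
    then have "ev q (i mod 2) (j mod 2) * ev q' (i mod 2) (j mod 2) = 0" by (rule ev_disj)
    then show ?thesis unfolding L' kr.simps
      by auto
  next
    case False
    then have "list_ex (\<lambda>(q,q'). disj q q') (zip L M)"
      using Cons.prems L' by simp
    then have "kr L (i div 2) (j div 2) * kr M (i div 2) (j div 2) = 0"
      by (rule Cons.IH)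
    then show ?thesis unfolding L' kr.simps
      by (simp add: algebra_simps)
  qed
qed

definition unit :: "int \<Rightarrow> bool" where "unit x = (x = -1 \<or> x = 0 \<or> x = 1)"

fun unitq :: "m2 \<Rightarrow> bool" where
  "unitq (a,b,c,d) = (unit a \<and> unit b \<and> unit c \<and> unit d)"

lemma unit_mult: "unit x \<Longrightarrow> unit y \<Longrightarrow> unit (x*y)"
  by (auto simp: unit_def)

lemma ev_unit: "unitq q \<Longrightarrow> unit (ev q a b)"
  by (cases q) auto

lemma kr_unit: "\<forall>q\<in>set L. unitq q \<Longrightarrow> unit (kr L i j)"
  by (induction L arbitrary: i j) (auto simp: unit_def[symmetric] intro!: unit_mult ev_unit,
      auto simp: unit_def)

fun mulH :: "m2 \<Rightarrow> m2" where
  "mulH (a,b,c,d) = (a+b, a-b, c+d, c-d)"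

definition AL :: "m2 list list" where
  "AL = [[(1,0,0,-1), (1,0,0,1), (1,0,0,1), (1,-1,1,1), (-1,1,1,1), (-1,1,1,1), (1,1,-1,1), (-1,1,1,1), (1,1,1,-1)],
    [(0,1,1,0), (1,0,0,-1), (1,0,0,-1), (-1,1,1,1), (1,1,1,-1), (-1,1,1,1), (1,-1,1,1), (1,1,-1,1), (1,1,1,-1)],
    [(1,0,0,1), (0,1,1,0), (1,0,0,1), (1,1,1,-1), (1,1,1,-1), (1,1,-1,1), (1,1,-1,1), (1,1,-1,1), (1,1,-1,1)],
    [(0,-1,1,0), (0,1,1,0), (1,0,0,1), (1,-1,1,1), (1,-1,1,1), (1,1,-1,1), (1,-1,1,1), (-1,1,1,1), (1,-1,1,1)],
    [(1,0,0,-1), (1,0,0,-1), (0,-1,1,0), (1,1,-1,1), (1,1,-1,1), (-1,1,1,1), (-1,1,1,1), (1,1,1,-1), (1,-1,1,1)],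
    [(0,1,1,0), (1,0,0,1), (0,-1,1,0), (1,1,-1,1), (-1,1,1,1), (1,1,-1,1), (1,1,-1,1), (1,-1,1,1), (1,1,1,-1)],
    [(1,0,0,-1), (0,-1,1,0), (0,1,1,0), (-1,1,1,1), (1,1,1,-1), (1,1,1,-1), (1,1,-1,1), (1,-1,1,1), (1,-1,1,1)],
    [(0,1,1,0), (0,-1,1,0), (0,-1,1,0), (-1,1,1,1), (1,1,-1,1), (-1,1,1,1), (1,1,1,-1), (1,-1,1,1), (1,1,-1,1)]]"

definition BL :: "m2 list list" where
  "BL = [[(1,0,0,1), (1,0,0,-1), (1,0,0,-1), (-1,1,1,1), (1,-1,1,1), (1,1,1,-1), (-1,1,1,1), (1,1,-1,1), (-1,1,1,1)],
    [(0,1,1,0), (1,0,0,1), (1,0,0,-1), (1,1,-1,1), (1,1,-1,1), (1,1,1,-1), (-1,1,1,1), (1,1,-1,1), (-1,1,1,1)],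
    [(1,0,0,-1), (0,-1,1,0), (1,0,0,1), (-1,1,1,1), (1,1,1,-1), (-1,1,1,1), (1,-1,1,1), (-1,1,1,1), (-1,1,1,1)],
    [(0,-1,1,0), (0,1,1,0), (1,0,0,1), (1,-1,1,1), (1,1,-1,1), (1,1,-1,1), (1,1,-1,1), (-1,1,1,1), (1,-1,1,1)],
    [(1,0,0,1), (1,0,0,1), (0,1,1,0), (1,-1,1,1), (1,1,-1,1), (1,-1,1,1), (-1,1,1,1), (1,-1,1,1), (1,1,-1,1)],
    [(0,1,1,0), (1,0,0,1), (0,1,1,0), (1,1,-1,1), (-1,1,1,1), (1,1,1,-1), (1,-1,1,1), (1,1,1,-1), (-1,1,1,1)],
    [(1,0,0,-1), (0,1,1,0), (0,1,1,0), (1,-1,1,1), (1,1,-1,1), (1,1,1,-1), (1,1,1,-1), (1,1,1,-1), (1,1,1,-1)],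
    [(0,-1,1,0), (0,-1,1,0), (0,1,1,0), (1,1,-1,1), (1,1,1,-1), (-1,1,1,1), (1,-1,1,1), (1,1,1,-1), (-1,1,1,1)]]"

definition antiP :: "m2 list \<Rightarrow> bool" where
  "antiP L = ((\<forall>q\<in>set L. sy q \<or> an q) \<and> odd (length (filter (\<lambda>q. \<not> sy q) L)))"
definition symP :: "m2 list \<Rightarrow> bool" where
  "symP L = ((\<forall>q\<in>set L. sy q \<or> an q) \<and> even (length (filter (\<lambda>q. \<not> sy q) L)))"
definition diagP :: "m2 list \<Rightarrow> bool" where
  "diagP L = ((\<forall>q\<in>set L. q = (fst q, 0, 0, fst q)) \<and> prod_list (map fst L) = 64)"

definition checks :: bool where
  "checks = list_all (\<lambda>s. list_all (\<lambda>t.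
      (s \<noteq> t \<longrightarrow> antiP (map2 mulT (AL!s) (AL!t)) \<and> antiP (map2 mulT (BL!s) (BL!t))
          \<and> list_ex (\<lambda>(q,q'). disj q q') (zip (AL!s) (AL!t))
          \<and> list_ex (\<lambda>(q,q'). disj q q') (zip (BL!s) (BL!t)))
      \<and> symP (map2 mulT (AL!s) (BL!t))) [0..<8]
      \<and> diagP (map2 mulT (AL!s) (AL!s)) \<and> diagP (map2 mulT (BL!s) (BL!s))
      \<and> list_all unitq (AL!s) \<and> list_all unitq (BL!s)
      \<and> length (AL!s) = 9 \<and> length (BL!s) = 9) [0..<8]"

lemma checks_ok: checks
  unfolding checks_def AL_def BL_def antiP_def symP_def diagP_def sy_def an_def unit_def
  by code_simp


lemma checksD:
  assumes "s < 8" "t < 8"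
  shows "s \<noteq> t \<Longrightarrow> antiP (map2 mulT (AL!s) (AL!t))"
    "s \<noteq> t \<Longrightarrow> antiP (map2 mulT (BL!s) (BL!t))"
    "s \<noteq> t \<Longrightarrow> list_ex (\<lambda>(q,q'). disj q q') (zip (AL!s) (AL!t))"
    "s \<noteq> t \<Longrightarrow> list_ex (\<lambda>(q,q'). disj q q') (zip (BL!s) (BL!t))"
    "symP (map2 mulT (AL!s) (BL!t))"
    "diagP (map2 mulT (AL!s) (AL!s))" "diagP (map2 mulT (BL!s) (BL!s))"
    "list_all unitq (AL!s)" "list_all unitq (BL!s)"
    "length (AL!s) = 9" "length (BL!s) = 9"
  using checks_ok assms unfolding checks_def list_all_iff by auto

definition Am :: "nat \<Rightarrow> nat \<Rightarrow> nat \<Rightarrow> int" where "Am t = kr (AL!t)"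
definition Bm :: "nat \<Rightarrow> nat \<Rightarrow> nat \<Rightarrow> int" where "Bm t = kr (BL!t)"

lemma KP9:
  assumes "length L = 9" "length L' = 9"
  shows "(\<Sum>l<512. kr L i l * kr L' j l) = kr (map2 mulT L L') i j"
  using KP[of L L' i j] assms by simp

lemma anti_kr: "antiP M \<Longrightarrow> kr M j i = - kr M i j"
  using kr_transp[of M j i] unfolding antiP_def by simp

lemma sym_kr: "symP M \<Longrightarrow> kr M j i = kr M i j"
  using kr_transp[of M j i] unfolding symP_def by simp

lemma diag_kr: "diagP M \<Longrightarrow> length M = 9 \<Longrightarrow> kr M i j = (if i = j \<and> i < 512 then 64 else 0)"
  using kr_diag[of M i j] unfolding diagP_def by force

lemma A_diag: "s < 8 \<Longrightarrow> i < 512 \<Longrightarrow> (\<Sum>l<512. Am s i l * Am s j l) = (if i = j then 64 else 0)"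
  unfolding Am_def using checksD[of s s] by (simp add: KP9 diag_kr)

lemma B_diag: "s < 8 \<Longrightarrow> i < 512 \<Longrightarrow> (\<Sum>l<512. Bm s i l * Bm s j l) = (if i = j then 64 else 0)"
  unfolding Bm_def using checksD[of s s] by (simp add: KP9 diag_kr)

lemma sum_swapij: "(\<Sum>l<m. (f::nat\<Rightarrow>nat\<Rightarrow>nat\<Rightarrow>int) t i l * g s j l) = (\<Sum>l<m. g s j l * f t i l)"
  by (simp add: mult.commute)

lemma lenA: "s < 8 \<Longrightarrow> length (AL!s) = 9" using checksD(10)[of s s] .
lemma lenB: "s < 8 \<Longrightarrow> length (BL!s) = 9" using checksD(11)[of s s] .

lemma A_anti: "s < 8 \<Longrightarrow> t < 8 \<Longrightarrow> s \<noteq> t \<Longrightarrow>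
   (\<Sum>l<512. Am s i l * Am t j l) + (\<Sum>l<512. Am t i l * Am s j l) = 0"
proof -
  assume a: "s < 8" "t < 8" "s \<noteq> t"
  have "(\<Sum>l<512. Am t i l * Am s j l) = (\<Sum>l<512. Am s j l * Am t i l)"
    by (simp add: mult.commute)
  also have "\<dots> = kr (map2 mulT (AL!s) (AL!t)) j i"
    unfolding Am_def by (rule KP9[OF lenA lenA]) (use a in auto)
  also have "\<dots> = - kr (map2 mulT (AL!s) (AL!t)) i j"
    by (rule anti_kr) (rule checksD(1)[OF a])
  also have "kr (map2 mulT (AL!s) (AL!t)) i j = (\<Sum>l<512. Am s i l * Am t j l)"
    unfolding Am_def by (rule KP9[OF lenA lenA, symmetric]) (use a in auto)
  finally show ?thesis by simp
qed

lemma B_anti: "s < 8 \<Longrightarrow> t < 8 \<Longrightarrow> s \<noteq> t \<Longrightarrow>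
   (\<Sum>l<512. Bm s i l * Bm t j l) + (\<Sum>l<512. Bm t i l * Bm s j l) = 0"
proof -
  assume a: "s < 8" "t < 8" "s \<noteq> t"
  have "(\<Sum>l<512. Bm t i l * Bm s j l) = (\<Sum>l<512. Bm s j l * Bm t i l)"
    by (simp add: mult.commute)
  also have "\<dots> = kr (map2 mulT (BL!s) (BL!t)) j i"
    unfolding Bm_def by (rule KP9[OF lenB lenB]) (use a in auto)
  also have "\<dots> = - kr (map2 mulT (BL!s) (BL!t)) i j"
    by (rule anti_kr) (rule checksD(2)[OF a])
  also have "kr (map2 mulT (BL!s) (BL!t)) i j = (\<Sum>l<512. Bm s i l * Bm t j l)"
    unfolding Bm_def by (rule KP9[OF lenB lenB, symmetric]) (use a in auto)
  finally show ?thesis by simp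
qed

lemma AB_amic: "s < 8 \<Longrightarrow> t < 8 \<Longrightarrow>
   (\<Sum>l<512. Am s i l * Bm t j l) = (\<Sum>l<512. Bm t i l * Am s j l)"
proof -
  assume a: "s < 8" "t < 8"
  have "(\<Sum>l<512. Bm t i l * Am s j l) = (\<Sum>l<512. Am s j l * Bm t i l)"
    by (simp add: mult.commute)
  also have "\<dots> = kr (map2 mulT (AL!s) (BL!t)) j i"
    unfolding Am_def Bm_def by (rule KP9[OF lenA lenB]) (use a in auto)
  also have "\<dots> = kr (map2 mulT (AL!s) (BL!t)) i j"
    by (rule sym_kr) (rule checksD(5)[OF a])
  also have "\<dots> = (\<Sum>l<512. Am s i l * Bm t j l)"
    unfolding Am_def Bm_def by (rule KP9[OF lenA lenB, symmetric]) (use a in auto)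
  finally show ?thesis by simp
qed

lemma A_disj: "s < 8 \<Longrightarrow> t < 8 \<Longrightarrow> s \<noteq> t \<Longrightarrow> Am s i j * Am t i j = 0"
  unfolding Am_def by (rule kr_disj) (rule checksD(3))
lemma B_disj: "s < 8 \<Longrightarrow> t < 8 \<Longrightarrow> s \<noteq> t \<Longrightarrow> Bm s i j * Bm t i j = 0"
  unfolding Bm_def by (rule kr_disj) (rule checksD(4))

lemma A_unit: "s < 8 \<Longrightarrow> unit (Am s i j)"
  unfolding Am_def by (rule kr_unit) (use checksD(8)[of s s] in \<open>simp add: list_all_iff\<close>)
lemma B_unit: "s < 8 \<Longrightarrow> unit (Bm s i j)"
  unfolding Bm_def by (rule kr_unit) (use checksD(9)[of s s] in \<open>simp add: list_all_iff\<close>)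


lemma expand:
  fixes x y :: "nat \<Rightarrow> 'r::comm_ring_1"
  shows "(\<Sum>l<m. (\<Sum>s<n. of_int (a s l) * x s) * (\<Sum>t<n. of_int (b t l) * y t))
       = (\<Sum>s<n. \<Sum>t<n. x s * y t * of_int (\<Sum>l<m. a s l * b t l))"
proof -
  have "(\<Sum>l<m. (\<Sum>s<n. of_int (a s l) * x s) * (\<Sum>t<n. of_int (b t l) * y t))
      = (\<Sum>l<m. \<Sum>s<n. \<Sum>t<n. x s * y t * of_int (a s l * b t l))"
    by (simp add: sum_product algebra_simps)
  also have "\<dots> = (\<Sum>s<n. \<Sum>l<m. \<Sum>t<n. x s * y t * of_int (a s l * b t l))"
    by (rule sum.swap)
  also have "\<dots> = (\<Sum>s<n. \<Sum>t<n. \<Sum>l<m. x s * y t * of_int (a s l * b t l))"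
    by (rule sum.cong[OF refl], rule sum.swap)
  also have "\<dots> = (\<Sum>s<n. \<Sum>t<n. x s * y t * of_int (\<Sum>l<m. a s l * b t l))"
    by (simp add: sum_distrib_left)
  finally show ?thesis .
qed

lemma gram:
  fixes x :: "nat \<Rightarrow> 'r::comm_ring_1"
  assumes "\<And>s. s < n \<Longrightarrow> G s s = g"
    and "\<And>s t. s < n \<Longrightarrow> t < n \<Longrightarrow> s \<noteq> t \<Longrightarrow> G s t + G t s = 0"
  shows "(\<Sum>s<n. \<Sum>t<n. x s * x t * of_int (G s t)) = of_int g * (\<Sum>s<n. x s ^ 2)"
  using assms
proof (induction n)
  case 0
  then show ?case by simp
next
  case (Suc n)
  have IH: "(\<Sum>s<n. \<Sum>t<n. x s * x t * of_int (G s t)) = of_int g * (\<Sum>s<n. x s ^ 2)"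
    using Suc.prems by (intro Suc.IH) auto
  have z: "(\<Sum>s<n. x s * x n * of_int (G s n) + x n * x s * of_int (G n s)) = 0"
  proof (rule sum.neutral, rule ballI)
    fix s assume "s \<in> {..<n}"
    then have "G s n + G n s = 0" using Suc.prems(2)[of s n] by auto
    then have "of_int (G s n) + of_int (G n s) = (0::'r)" by (metis of_int_add of_int_0)
    then have "x s * x n * (of_int (G s n) + of_int (G n s)) = 0" by simp
    then show "x s * x n * of_int (G s n) + x n * x s * of_int (G n s) = 0"
      by (simp add: algebra_simps)
  qed
  have d: "G n n = g" using Suc.prems(1) by auto
  have "(\<Sum>s<Suc n. \<Sum>t<Suc n. x s * x t * of_int (G s t))
      = (\<Sum>s<n. \<Sum>t<n. x s * x t * of_int (G s t))
        + (\<Sum>s<n. x s * x n * of_int (G s n) + x n * x s * of_int (G n s)) + x n * x n * of_int (G n n)"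
    by (simp add: sum.distrib algebra_simps)
  also have "\<dots> = of_int g * (\<Sum>s<Suc n. x s ^ 2)"
    unfolding IH z d by (simp add: algebra_simps power2_eq_square)
  finally show ?case .
qed

lemma entry:
  fixes x :: "nat \<Rightarrow> 'r::comm_ring_1"
  assumes "\<And>s t. s < n \<Longrightarrow> t < n \<Longrightarrow> s \<noteq> t \<Longrightarrow> a s * a t = 0"
    and "\<And>s. s < n \<Longrightarrow> unit (a s)"
  shows "(\<Sum>t<n. of_int (a t) * x t) = 0 \<or> (\<exists>t<n. (\<Sum>t<n. of_int (a t) * x t) = x t \<or> (\<Sum>t<n. of_int (a t) * x t) = - x t)"
proof (cases "\<forall>t<n. a t = 0")
  case True
  then show ?thesis by simp
next
  case False
  then obtain t0 where t0: "t0 < n" "a t0 \<noteq> 0" by auto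
  have oth: "a t = 0" if "t < n" "t \<noteq> t0" for t
    using assms(1)[OF that(1) t0(1) that(2)] t0(2) by simp
  have "(\<Sum>t<n. of_int (a t) * x t) = of_int (a t0) * x t0 + (\<Sum>t\<in>{..<n} - {t0}. of_int (a t) * x t)"
    using t0(1) by (subst sum.remove[of _ t0]) auto
  also have "(\<Sum>t\<in>{..<n} - {t0}. of_int (a t) * x t) = 0"
    by (rule sum.neutral) (auto simp: oth)
  finally have e: "(\<Sum>t<n. of_int (a t) * x t) = of_int (a t0) * x t0" by simp
  have "a t0 = 1 \<or> a t0 = -1" using assms(2)[OF t0(1)] t0(2) by (auto simp: unit_def)
  then show ?thesis using e t0(1) by auto
qed

definition CC :: "nat \<Rightarrow> nat \<Rightarrow> mpoly" where
  "CC i j = (\<Sum>t<8. of_int (Am t i j) * xv t)"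
definition DD :: "nat \<Rightarrow> nat \<Rightarrow> mpoly" where
  "DD i j = (\<Sum>t<8. of_int (Bm t i j) * yv t)"

theorem lemma5p2:
  shows "\<exists>C D. is_AOD (2^9) (replicate 8 (2^6)) (replicate 8 (2^6)) C D"
proof (intro exI)
  have ent1: "entries_in (2^9) xv 8 CC"
    unfolding entries_in_def CC_def
    by (intro allI impI entry; (rule A_disj A_unit)?; simp)
  have ent2: "entries_in (2^9) yv 8 DD"
    unfolding entries_in_def DD_def
    by (intro allI impI entry; (rule B_disj B_unit)?; simp)
  have g1: "gram_ok (2^9) xv (replicate 8 (2^6)) CC"
    unfolding gram_ok_def
  proof (intro allI impI)
    fix i j :: nat assume ij: "i < 2^9" "j < 2^9"
    have "(\<Sum>l<2^9. CC i l * CC j l) = (\<Sum>s<8. \<Sum>t<8. xv s * xv t * of_int (\<Sum>l<512. Am s i l * Am t j l))"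
      unfolding CC_def by (simp add: expand)
    also have "\<dots> = of_int (if i = j then 64 else 0) * (\<Sum>s<8. xv s ^ 2)"
      by (rule gram) (use ij in \<open>auto simp: A_diag A_anti\<close>)
    also have "\<dots> = (if i = j then (\<Sum>t<length (replicate 8 (2^6::nat)). of_nat (replicate 8 (2^6) ! t) * xv t ^ 2) else 0)"
      by (simp add: sum_distrib_left)
    finally show "(\<Sum>l<2^9. CC i l * CC j l) = (if i = j then (\<Sum>t<length (replicate 8 (2^6::nat)). of_nat (replicate 8 (2^6) ! t) * xv t ^ 2) else 0)" .
  qed
  have g2: "gram_ok (2^9) yv (replicate 8 (2^6)) DD"
    unfolding gram_ok_def
  proof (intro allI impI)
    fix i j :: nat assume ij: "i < 2^9" "j < 2^9"
    have "(\<Sum>l<2^9. DD i l * DD j l) = (\<Sum>s<8. \<Sum>t<8. yv s * yv t * of_int (\<Sum>l<512. Bm s i l * Bm t j l))"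
      unfolding DD_def by (simp add: expand)
    also have "\<dots> = of_int (if i = j then 64 else 0) * (\<Sum>s<8. yv s ^ 2)"
      by (rule gram) (use ij in \<open>auto simp: B_diag B_anti\<close>)
    also have "\<dots> = (if i = j then (\<Sum>t<length (replicate 8 (2^6::nat)). of_nat (replicate 8 (2^6) ! t) * yv t ^ 2) else 0)"
      by (simp add: sum_distrib_left)
    finally show "(\<Sum>l<2^9. DD i l * DD j l) = (if i = j then (\<Sum>t<length (replicate 8 (2^6::nat)). of_nat (replicate 8 (2^6) ! t) * yv t ^ 2) else 0)" .
  qed
  have am: "\<forall>i<2^9. \<forall>j<2^9. (\<Sum>l<2^9. CC i l * DD j l) = (\<Sum>l<2^9. DD i l * CC j l)"
  proof (intro allI impI)
    fix i j :: nat
    have "(\<Sum>l<2^9. CC i l * DD j l) = (\<Sum>s<8. \<Sum>t<8. xv s * yv t * of_int (\<Sum>l<512. Am s i l * Bm t j l))"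
      unfolding CC_def DD_def by (simp add: expand)
    also have "\<dots> = (\<Sum>s<8. \<Sum>t<8. xv s * yv t * of_int (\<Sum>l<512. Bm t i l * Am s j l))"
      by (intro sum.cong refl) (simp add: AB_amic)
    also have "\<dots> = (\<Sum>t<8. \<Sum>s<8. yv t * xv s * of_int (\<Sum>l<512. Bm t i l * Am s j l))"
      by (subst sum.swap) (simp add: mult.commute)
    also have "\<dots> = (\<Sum>l<2^9. DD i l * CC j l)"
      unfolding CC_def DD_def by (simp add: expand)
    finally show "(\<Sum>l<2^9. CC i l * DD j l) = (\<Sum>l<2^9. DD i l * CC j l)" .
  qed
  show "is_AOD (2^9) (replicate 8 (2^6)) (replicate 8 (2^6)) CC DD"
    unfolding is_AOD_def using ent1 ent2 g1 g2 am by simp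
qed

end
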